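(* Let $\Sigma=(0,\infty]$, ordered by the usual order $\le$, and let $c\in\mathbb{R}$ with $c>0$. Fix $z\in\Sigma^{\infty}$ with $l(z)=\infty$ and $z_k\neq\infty$ for all $k\in\mathbb{N}$ with $k\ge2$. Let $\Sigma_c^{\infty}:=\{y\in\Sigma^{\infty}: 2\le l(y) \text{ and } y_1=c\}$. Define $\Psi^z:\Sigma_c^{\infty}\to\Sigma_c^{\infty}$ by $\Psi^z(x)=x_{\Psi^z}$, where $$(x_{\Psi^z})_k:=\begin{cases} c & \text{if } k=1,\\ x_{k-1}+z_k & \text{if } 2\le k\le l(x)+1.\end{cases}$$ Then $\Psi^z$ has a unique fixed point $v\in\Sigma_c^{\infty}$, and $l(v)=\infty$. Moreover, if $u\in\Sigma_c^{\infty}$ satisfies $\Psi^z(u)\sqsubseteq_{sp}u$, then $v\sqsubseteq_{sp}u$.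
   Context: $\mathbb{N}$ is the set of positive integers. $\Sigma^{\infty}$ is the set of all nonempty finite and infinite words over $\Sigma$; $l(x)\in[1,\infty]$ is the length of $x$ and $x_k$ its $k$-th letter (so for infinite $x$, $l(x)+1=\infty$). For $x,y\in\Sigma^\infty$, $x\sqsubseteq_{sp}y$ ("$x$ is a subprefix of $y$") means there exists $n_0\in\mathbb{N}$ with $n_0\le l(x)$ such that $x_k\le y_k$ for all $k\le n_0$. Arithmetic on $(0,\infty]$ uses the usual conventions with $\infty$. *)

theory Defs
  imports Main "HOL-Library.Extended_Nonnegative_Real"
begin

text \<open>Letters come from Sigma = (0, infinity], represented as the positive elements of ennreal.
A word is a pair (length, letters) where the length is an element of enat with length >= 1
(infinity for infinite words), letters are indexed from 1, and positions outside 1..length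
carry the dummy value 0 (so that the representation is canonical).\<close>

type_synonym word = "enat \<times> (nat \<Rightarrow> ennreal)"

definition len :: "word \<Rightarrow> enat" where "len w = fst w"

definition letter :: "word \<Rightarrow> nat \<Rightarrow> ennreal" where "letter w k = snd w k"

definition Words :: "word set" where
  "Words = {w. 1 \<le> len w
      \<and> (\<forall>k. 1 \<le> k \<and> enat k \<le> len w \<longrightarrow> 0 < letter w k)
      \<and> (\<forall>k. \<not> (1 \<le> k \<and> enat k \<le> len w) \<longrightarrow> letter w k = 0)}"

definition Words_c :: "real \<Rightarrow> word set" where
  "Words_c c = {y \<in> Words. 2 \<le> len y \<and> letter y 1 = ennreal c}"

definition Psi :: "real \<Rightarrow> word \<Rightarrow> word \<Rightarrow> word" where
  "Psi c z x = (len x + 1,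
     \<lambda>k. if k = 1 then ennreal c
         else if 2 \<le> k \<and> enat k \<le> len x + 1 then letter x (k - 1) + letter z k
         else 0)"

definition subprefix :: "word \<Rightarrow> word \<Rightarrow> bool" where
  "subprefix x y \<longleftrightarrow> (\<exists>n0::nat. 1 \<le> n0 \<and> enat n0 \<le> len x \<and> enat n0 \<le> len y
      \<and> (\<forall>k. 1 \<le> k \<and> k \<le> n0 \<longrightarrow> letter x k \<le> letter y k))"

end

theory Submission
  imports Defs
begin

lemma enat_eq_plus1: "(x::enat) = x + 1 \<Longrightarrow> x = \<infinity>"
  by (cases x) auto

theorem theorem11:
  fixes c :: real and z :: word
  assumes "0 < c"
    and "z \<in> Words"
    and "len z = \<infinity>"
    and "\<forall>k::nat. 2 \<le> k \<longrightarrow> letter z k \<noteq> \<infinity>"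
  shows "\<exists>v. v \<in> Words_c c \<and> Psi c z v = v
           \<and> (\<forall>w \<in> Words_c c. Psi c z w = w \<longrightarrow> w = v)
           \<and> len v = \<infinity>
           \<and> (\<forall>u \<in> Words_c c. subprefix (Psi c z u) u \<longrightarrow> subprefix v u)"
proof -
  define f where "f = (\<lambda>k::nat. if k = 0 then 0 else ennreal c + (\<Sum>j\<in>{2..k}. letter z j))"
  define v :: word where "v = (\<infinity>, f)"
  have lv: "len v = \<infinity>" by (simp add: v_def len_def)
  have letv: "letter v k = f k" for k by (simp add: v_def letter_def)
  have f1: "f 1 = ennreal c" by (simp add: f_def)
  have fS: "f (Suc k) = f k + letter z (Suc k)" if "k \<ge> 1" for k
  proof -
    have "{2..Suc k} = insert (Suc k) {2..k}" using that by auto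
    then show ?thesis using that by (simp add: f_def add.commute add.left_commute)
  qed
  have fpos: "k \<ge> 1 \<Longrightarrow> 0 < f k" for k
    using assms(1) by (simp add: f_def add_pos_nonneg)
  have vW: "v \<in> Words_c c"
    unfolding Words_c_def Words_def using fpos
    by (auto simp: lv letv f1 f_def)
  have fixv: "Psi c z v = v"
  proof -
    have "(\<lambda>k. if k = 1 then ennreal c
         else if 2 \<le> k \<and> enat k \<le> len v + 1 then letter v (k - 1) + letter z k
         else 0) = f"
    proof
      fix k show "(if k = 1 then ennreal c
         else if 2 \<le> k \<and> enat k \<le> len v + 1 then letter v (k - 1) + letter z k
         else 0) = f k"
      proof (cases k)
        case 0 then show ?thesis by (simp add: f_def)
      next
        case (Suc m)
        show ?thesis
        proof (cases "m = 0")
          case True then show ?thesis using Suc f1 by simp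
        next
          case False then show ?thesis using Suc fS[of m] by (simp add: lv letv)
        qed
      qed
    qed
    then have "Psi c z v = (len v + 1, f)" by (simp only: Psi_def)
    then show ?thesis using lv by (simp add: v_def)
  qed
  have uniq: "w = v" if wW: "w \<in> Words_c c" and wf: "Psi c z w = w" for w
  proof -
    have "len w = len w + 1"
    proof -
      have "len (Psi c z w) = len w + 1" by (simp add: Psi_def len_def)
      then show ?thesis using wf by simp
    qed
    then have lw: "len w = \<infinity>" by (rule enat_eq_plus1)
    have wl: "letter w k = (if k = 1 then ennreal c
         else if 2 \<le> k \<and> enat k \<le> len w + 1 then letter w (k - 1) + letter z k
         else 0)" for k
    proof -
      have "letter (Psi c z w) k = (if k = 1 then ennreal c
         else if 2 \<le> k \<and> enat k \<le> len w + 1 then letter w (k - 1) + letter z k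
         else 0)" by (simp add: Psi_def letter_def)
      then show ?thesis using wf by simp
    qed
    have "letter w k = f k" for k
    proof (induction k)
      case 0 then show ?case using wl[of 0] by (simp add: f_def)
    next
      case (Suc m)
      show ?case
      proof (cases "m = 0")
        case True then show ?thesis using wl[of 1] f1 by simp
      next
        case False then show ?thesis using wl[of "Suc m"] fS[of m] Suc lw by simp
      qed
    qed
    then have "snd w = f" by (auto simp: letter_def)
    moreover have "fst w = \<infinity>" using lw by (simp add: len_def)
    ultimately show ?thesis by (simp add: v_def prod_eq_iff)
  qed
  have sub: "subprefix v u" if uW: "u \<in> Words_c c" and sp: "subprefix (Psi c z u) u" for u
  proof -
    obtain n0 where n0: "1 \<le> n0" "enat n0 \<le> len u"
      and le: "\<forall>k. 1 \<le> k \<and> k \<le> n0 \<longrightarrow> letter (Psi c z u) k \<le> letter u k"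
      using sp unfolding subprefix_def by blast
    have u1: "letter u 1 = ennreal c" using uW by (simp add: Words_c_def)
    have "k \<le> n0 \<longrightarrow> 1 \<le> k \<longrightarrow> f k \<le> letter u k" for k
    proof (induction k)
      case 0 then show ?case by simp
    next
      case (Suc m)
      show ?case
      proof (cases "m = 0")
        case True then show ?thesis using f1 u1 by simp
      next
        case False
        show ?thesis
        proof (intro impI)
          assume a: "Suc m \<le> n0"
          then have "f m \<le> letter u m" using Suc False by simp
          moreover have "enat (Suc m) \<le> len u + 1"
            using a n0(2) by (metis add.commute enat_ord_simps(1) le_iff_add order_trans)
          moreover have "letter (Psi c z u) (Suc m) \<le> letter u (Suc m)" using le a by simp
          ultimately have "f m + letter z (Suc m) \<le> letter u (Suc m)"
            using False by (auto simp: Psi_def letter_def intro: order_trans add_right_mono)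
          then show "f (Suc m) \<le> letter u (Suc m)" using fS[of m] False by simp
        qed
      qed
    qed
    then show ?thesis unfolding subprefix_def using n0 by (auto simp: lv letv)
  qed
  show ?thesis using vW fixv uniq lv sub by blast
qed

end
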